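(* For every integer $n\ge 1$, with $\omega_n:=\max\{r: c_r(n)\neq 0\}$ the clique number of $G_n$, \[ \chi(K_n)=\sum_{r=1}^{\omega_n}(-1)^{r-1}c_r(n)=\chi(N_n). \]
   Context: $G_n$ is the partition graph on the set of integer partitions of $n$: two partitions are adjacent if one is obtained from the other by decreasing one part by $1$ and increasing another part (possibly a part equal to $0$) by $1$, followed by reordering, with the result different from the original. $K_n=\operatorname{Cl}(G_n)$ is its clique complex, and $c_r(n)$ is the number of $r$-vertex cliques of $G_n$. For $\lambda=(\lambda_1\ge\lambda_2\ge\cdots)\vdash n$ of length $\ell$, a removable corner is a row $i$ with $\lambda_i>\lambda_{i+1}$, and an addable corner is a row $j\le\ell+1$ with $j=1$ or $\lambda_{j-1}>\lambda_j$. For a removable corner $c=i$ and addable corner $a=j$, $i\ne j$, $\lambda(c\to a)$ is obtained by decreasing $\lambda_i$ by $1$, increasing $\lambda_j$ by $1$, and reordering; the transfer is admissible if $\lambda(c\to a)\ne\lambda$. With $A_{\max}(\lambda,c)=\{a:\lambda(c\to a)\text{ admissible}\}$ and $C_{\max}(\lambda,a)=\{c:\lambda(c\to a)\text{ admissible}\}$, the full star-simplex is $\Sigma^{\star}_{\max}(\lambda,c)=\{\lambda\}\cup\{\lambda(c\to a):a\in A_{\max}(\lambda,c)\}$ and the full top-simplex is $\Sigma^{\top}_{\max}(\lambda,a)=\{\lambda\}\cup\{\lambda(c\to a):c\in C_{\max}(\lambda,a)\}$. $C_n$ is the family of all distinct full star- and full top-simplices (each regarded as a full simplex subcomplex of $K_n$),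 and $N_n$ is its nerve: the simplicial complex on vertex set $C_n$ whose simplices are nonempty subfamilies with nonempty common intersection. *)

theory Defs
  imports Main
begin

definition partitions :: "nat \<Rightarrow> nat list set" where
  "partitions n = {xs. sorted_wrt (\<ge>) xs \<and> (\<forall>x\<in>set xs. 0 < x) \<and> sum_list xs = n}"

text \<open>Part lambda_i (1-based), with lambda_i = 0 for i beyond the length.\<close>
definition part :: "nat list \<Rightarrow> nat \<Rightarrow> nat" where
  "part lam i = (if 1 \<le> i \<and> i \<le> length lam then lam ! (i - 1) else 0)"

definition move :: "nat list \<Rightarrow> nat \<Rightarrow> nat \<Rightarrow> nat list" where
  "move lam i j =
     rev (sort (filter (\<lambda>x. 0 < x)
       (map (\<lambda>k. part lam k + (if k = j then 1 else 0) - (if k = i then 1 else 0))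
            [1..<length lam + 2])))"

definition pmove :: "nat list \<Rightarrow> nat list \<Rightarrow> bool" where
  "pmove mu nu \<longleftrightarrow> (\<exists>i j. i \<noteq> j \<and> 1 \<le> i \<and> i \<le> length mu \<and> 1 \<le> j \<and> j \<le> length mu + 1
                       \<and> move mu i j = nu \<and> nu \<noteq> mu)"

definition padj :: "nat list \<Rightarrow> nat list \<Rightarrow> bool" where
  "padj mu nu \<longleftrightarrow> pmove mu nu \<or> pmove nu mu"

definition euler_char :: "'a set set \<Rightarrow> int" where
  "euler_char K = (\<Sum>\<sigma>\<in>K. (-1) ^ (card \<sigma> - 1))"

definition clique_complex :: "nat \<Rightarrow> nat list set set" where
  "clique_complex n = {\<sigma>. \<sigma> \<noteq> {} \<and> finite \<sigma> \<and> \<sigma> \<subseteq> partitions n \<and>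
      (\<forall>x\<in>\<sigma>. \<forall>y\<in>\<sigma>. x \<noteq> y \<longrightarrow> padj x y)}"

definition clique_count :: "nat \<Rightarrow> nat \<Rightarrow> nat" where
  "clique_count r n = card {\<sigma>. \<sigma> \<in> clique_complex n \<and> card \<sigma> = r}"

definition clique_number :: "nat \<Rightarrow> nat" where
  "clique_number n = Max {r. clique_count r n \<noteq> 0}"

definition removable :: "nat list \<Rightarrow> nat \<Rightarrow> bool" where
  "removable lam i \<longleftrightarrow> 1 \<le> i \<and> i \<le> length lam \<and> part lam i > part lam (i + 1)"

definition addable :: "nat list \<Rightarrow> nat \<Rightarrow> bool" where
  "addable lam j \<longleftrightarrow> 1 \<le> j \<and> j \<le> length lam + 1 \<and> (j = 1 \<or> part lam (j - 1) > part lam j)"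

definition admissible :: "nat list \<Rightarrow> nat \<Rightarrow> nat \<Rightarrow> bool" where
  "admissible lam c a \<longleftrightarrow> removable lam c \<and> addable lam a \<and> c \<noteq> a \<and> move lam c a \<noteq> lam"

definition star_simplex :: "nat list \<Rightarrow> nat \<Rightarrow> nat list set" where
  "star_simplex lam c = {lam} \<union> {move lam c a | a. admissible lam c a}"

definition top_simplex :: "nat list \<Rightarrow> nat \<Rightarrow> nat list set" where
  "top_simplex lam a = {lam} \<union> {move lam c a | c. admissible lam c a}"

text \<open>The family C_n, each member recorded by its vertex set.\<close>
definition cover_family :: "nat \<Rightarrow> nat list set set" where
  "cover_family n =
     {star_simplex lam c | lam c. lam \<in> partitions n \<and> removable lam c} \<union>
     {top_simplex lam a | lam a. lam \<in> partitions n \<and> addable lam a}"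

definition full_simplex :: "'a set \<Rightarrow> 'a set set" where
  "full_simplex \<sigma> = {\<tau>. \<tau> \<noteq> {} \<and> \<tau> \<subseteq> \<sigma>}"

definition nerve :: "nat \<Rightarrow> nat list set set set" where
  "nerve n = {F. F \<noteq> {} \<and> F \<subseteq> cover_family n \<and> (\<Inter>\<sigma>\<in>F. full_simplex \<sigma>) \<noteq> {}}"

end

theory Submission
  imports Defs "HOL-Library.Multiset"
begin

abbreviation prt :: "nat list \<Rightarrow> nat \<Rightarrow> nat" where "prt \<equiv> Defs.part"

definition ispart :: "nat list \<Rightarrow> bool" where
  "ispart xs \<longleftrightarrow> sorted_wrt (\<ge>) xs \<and> (\<forall>x\<in>set xs. 0 < x)"

lemma part_0[simp]: "prt lam 0 = 0"
  by (simp add: Defs.part_def)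

lemma part_gt: "length lam < i \<Longrightarrow> prt lam i = 0"
  by (simp add: Defs.part_def)

lemma part_in: "1 \<le> i \<Longrightarrow> i \<le> length lam \<Longrightarrow> prt lam i = lam ! (i - 1)"
  by (simp add: Defs.part_def)

lemma part_pos: "ispart lam \<Longrightarrow> (0 < prt lam k \<longleftrightarrow> 1 \<le> k \<and> k \<le> length lam)"
  unfolding ispart_def Defs.part_def
  by (auto dest!: nth_mem)

lemma part_mono:
  assumes "ispart lam" "1 \<le> k" "k \<le> l"
  shows "prt lam l \<le> prt lam k"
proof (cases "l \<le> length lam")
  case False then show ?thesis by (simp add: part_gt)
next
  case True
  show ?thesis
  proof (cases "k = l")
    case True then show ?thesis by simp
  next
    case False
    with assms have "k < l" by simp
    have "lam ! (l - 1) \<le> lam ! (k - 1)"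
      using assms(1) \<open>k < l\<close> True assms(2) unfolding ispart_def sorted_wrt_iff_nth_less
      by auto
    then show ?thesis using True assms \<open>k<l\<close> by (simp add: part_in)
  qed
qed

lemma part_inj:
  assumes "\<forall>x\<in>set xs. 0 < x" "\<forall>x\<in>set ys. 0 < x" "\<And>k. 1 \<le> k \<Longrightarrow> prt xs k = prt ys k"
  shows "xs = ys"
proof -
  have pxs: "0 < prt xs k \<longleftrightarrow> 1 \<le> k \<and> k \<le> length xs" for k
    using assms(1) unfolding Defs.part_def by (auto dest!: nth_mem)
  have pys: "0 < prt ys k \<longleftrightarrow> 1 \<le> k \<and> k \<le> length ys" for k
    using assms(2) unfolding Defs.part_def by (auto dest!: nth_mem)
  have len: "length xs = length ys"
  proof (rule ccontr)
    assume "length xs \<noteq> length ys"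
    then consider "length xs < length ys" | "length ys < length xs" by linarith
    then show False
    proof cases
      case 1
      then show False using pxs[of "length ys"] pys[of "length ys"] assms(3)[of "length ys"] by auto
    next
      case 2
      then show False using pxs[of "length xs"] pys[of "length xs"] assms(3)[of "length xs"] by auto
    qed
  qed
  show ?thesis
  proof (rule nth_equalityI[OF len])
    fix i assume "i < length xs"
    then show "xs ! i = ys ! i" using assms(3)[of "Suc i"] len by (simp add: Defs.part_def)
  qed
qed

lemma wmono:
  fixes w :: "nat \<Rightarrow> nat"
  assumes "\<And>k. 1 \<le> k \<Longrightarrow> w (Suc k) \<le> w k" "1 \<le> k" "k \<le> l"
  shows "w l \<le> w k"
  using assms(3)
proof (induction l)
  case 0 then show ?case using assms(2) by simp
next
  case (Suc l)
  show ?case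
  proof (cases "k = Suc l")
    case True then show ?thesis by simp
  next
    case False
    then have "k \<le> l" using Suc.prems by simp
    then show ?thesis using Suc.IH assms(1)[of l] assms(2) by force
  qed
qed

lemma filt:
  fixes w :: "nat \<Rightarrow> nat"
  assumes mono: "\<And>k. 1 \<le> k \<Longrightarrow> w (Suc k) \<le> w k" and w0: "w 0 = 0"
  shows "(\<And>k. m < k \<Longrightarrow> w k = 0) \<Longrightarrow> \<exists>L\<le>m. filter (\<lambda>x. 0 < x) (map w [1..<Suc m]) = map w [1..<Suc L]
           \<and> (\<forall>k. 0 < w k \<longleftrightarrow> 1 \<le> k \<and> k \<le> L)"
proof (induction m)
  case 0
  have "w k = 0" for k using w0 0[of k] by (cases k) auto
  then show ?case by (intro exI[of _ 0]) auto
next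
  case (Suc m)
  show ?case
  proof (cases "w (Suc m) = 0")
    case True
    then have "\<And>k. m < k \<Longrightarrow> w k = 0" using Suc.prems by (metis Suc_lessI)
    from Suc.IH[OF this] obtain L where L: "L \<le> m"
      "filter (\<lambda>x. 0 < x) (map w [1..<Suc m]) = map w [1..<Suc L]" "\<forall>k. 0 < w k \<longleftrightarrow> 1 \<le> k \<and> k \<le> L"
      by blast
    show ?thesis using L True by (intro exI[of _ L]) auto
  next
    case False
    have pos: "0 < w k \<longleftrightarrow> 1 \<le> k \<and> k \<le> Suc m" for k
    proof
      assume p: "0 < w k"
      have "k \<noteq> 0"
      proof
        assume "k = 0" then show False using p w0 by simp
      qed
      moreover have "\<not> Suc m < k" using p Suc.prems[of k] by auto
      ultimately show "1 \<le> k \<and> k \<le> Suc m" by simp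
    next
      assume "1 \<le> k \<and> k \<le> Suc m"
      then show "0 < w k" using wmono[where w=w, OF mono, of k "Suc m"] False by auto
    qed
    have "filter (\<lambda>x. 0 < x) (map w [1..<Suc (Suc m)]) = map w [1..<Suc (Suc m)]"
      using pos by (auto simp: filter_id_conv)
    then show ?thesis using pos by (intro exI[of _ "Suc m"]) auto
  qed
qed

lemma realize:
  fixes w :: "nat \<Rightarrow> nat"
  assumes mono: "\<And>k. 1 \<le> k \<Longrightarrow> w (Suc k) \<le> w k" and w0: "w 0 = 0"
    and z: "\<And>k. m < k \<Longrightarrow> w k = 0"
  shows "ispart (rev (sort (filter (\<lambda>x. 0 < x) (map w [1..<Suc m]))))
       \<and> (\<forall>k. prt (rev (sort (filter (\<lambda>x. 0 < x) (map w [1..<Suc m])))) k = w k)"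
proof -
  obtain L where L: "filter (\<lambda>x. 0 < x) (map w [1..<Suc m]) = map w [1..<Suc L]"
      "\<forall>k. 0 < w k \<longleftrightarrow> 1 \<le> k \<and> k \<le> L"
    using filt[OF mono w0 z] by blast
  define nu where "nu = map w [1..<Suc L]"
  have sw: "sorted_wrt (\<ge>) nu"
    unfolding nu_def sorted_wrt_map
    by (rule sorted_wrt_mono_rel[OF _ sorted_wrt_upt]) (use wmono[where w=w, OF mono] in auto)
  have "sort nu = rev nu"
    by (rule properties_for_sort) (use sw in \<open>auto simp: sorted_wrt_rev\<close>)
  then have r: "rev (sort nu) = nu" by simp
  have ip: "ispart nu" using sw L(2) unfolding ispart_def nu_def by auto
  have pk: "prt nu k = w k" for k
  proof (cases "1 \<le> k \<and> k \<le> L")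
    case True
    then have "k - 1 < L" by linarith
    then have "nu ! (k - 1) = w k" using True unfolding nu_def by (simp del: upt_Suc)
    then show ?thesis using True by (simp add: Defs.part_def nu_def)
  next
    case False then show ?thesis using L(2)[rule_format, of k] by (auto simp: Defs.part_def nu_def)
  qed
  have eq: "rev (sort (filter (\<lambda>x. 0 < x) (map w [1..<Suc m]))) = nu"
    using L(1) r unfolding nu_def by simp
  show ?thesis unfolding eq using ip pk by simp
qed


lemma sort_cong: "mset xs = mset ys \<Longrightarrow> sort xs = sort ys"
  by (rule properties_for_sort) auto

lemma mset_upd:
  "distinct xs \<Longrightarrow> i \<in> set xs \<Longrightarrow> mset (map (h(i:=v)) xs) = mset (map h xs) - {#h i#} + {#v#}"
proof (induction xs)
  case Nil then show ?case by simp
next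
  case (Cons x xs)
  show ?case
  proof (cases "x = i")
    case True
    then have "i \<notin> set xs" using Cons.prems by simp
    then have e: "map (h(i:=v)) (x#xs) = v # map h xs" using True by simp
    show ?thesis unfolding e using True by simp
  next
    case False
    then have "i \<in> set xs" using Cons.prems by simp
    then have "h i \<in># mset (map h xs)" by simp
    then show ?thesis using Cons False by (simp add: diff_union_single_conv)
  qed
qed

definition shifted :: "nat list \<Rightarrow> nat \<Rightarrow> nat \<Rightarrow> nat list \<Rightarrow> bool" where
  "shifted lam c a nu \<longleftrightarrow> (\<forall>k. int (prt nu k) = int (prt lam k) + (if k = a then 1 else 0) - (if k = c then 1 else 0))"

lemma move_alt: "move lam i j = rev (sort (filter (\<lambda>x. 0 < x)
       (map (\<lambda>k. prt lam k + (if k = j then 1 else 0) - (if k = i then 1 else 0)) [1..<Suc (Suc (length lam))])))"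
  unfolding move_def by simp

lemma mset_move_list:
  fixes h :: "nat \<Rightarrow> nat"
  assumes "i \<noteq> j" "i \<in> set L" "j \<in> set L" "distinct L"
  shows "mset (map (\<lambda>k. h k + (if k = j then 1 else 0) - (if k = i then 1 else 0)) L)
       = mset (map h L) - {#h i#} + {#h i - 1#} - {#h j#} + {#h j + 1#}"
proof -
  have "(\<lambda>k. h k + (if k = j then 1 else 0) - (if k = i then 1 else 0)) = (h(i := h i - 1))(j := h j + 1)"
    using assms(1) by (auto simp: fun_eq_iff)
  then have "mset (map (\<lambda>k. h k + (if k = j then 1 else 0) - (if k = i then 1 else 0)) L)
      = mset (map (h(i := h i - 1)) L) - {#(h(i := h i - 1)) j#} + {#h j + 1#}"
    using mset_upd[OF assms(4) assms(3), of "h(i := h i - 1)" "h j + 1"] by simp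
  also have "\<dots> = mset (map h L) - {#h i#} + {#h i - 1#} - {#h j#} + {#h j + 1#}"
    using mset_upd[OF assms(4) assms(2), of h "h i - 1"] assms(1) by simp
  finally show ?thesis .
qed

lemma move_cong:
  assumes "i \<noteq> j" "1 \<le> i" "i \<le> Suc (length lam)" "1 \<le> j" "j \<le> Suc (length lam)"
    "c \<noteq> a" "1 \<le> c" "c \<le> Suc (length lam)" "1 \<le> a" "a \<le> Suc (length lam)"
    "prt lam c = prt lam i" "prt lam a = prt lam j"
  shows "move lam i j = move lam c a"
proof -
  let ?L = "[1..<Suc (Suc (length lam))]"
  have m1: "mset (map (\<lambda>k. prt lam k + (if k = j then 1 else 0) - (if k = i then 1 else 0)) ?L)
      = mset (map (prt lam) ?L) - {#prt lam i#} + {#prt lam i - 1#} - {#prt lam j#} + {#prt lam j + 1#}"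
    by (rule mset_move_list) (use assms in auto)
  have m2: "mset (map (\<lambda>k. prt lam k + (if k = a then 1 else 0) - (if k = c then 1 else 0)) ?L)
      = mset (map (prt lam) ?L) - {#prt lam c#} + {#prt lam c - 1#} - {#prt lam a#} + {#prt lam a + 1#}"
    by (rule mset_move_list) (use assms in auto)
  have "mset (filter (\<lambda>x. 0 < x) (map (\<lambda>k. prt lam k + (if k = j then 1 else 0) - (if k = i then 1 else 0)) ?L))
      = mset (filter (\<lambda>x. 0 < x) (map (\<lambda>k. prt lam k + (if k = a then 1 else 0) - (if k = c then 1 else 0)) ?L))"
    unfolding mset_filter m1 m2 assms(11,12) by (rule refl)
  then show ?thesis unfolding move_alt by (rule arg_cong[where f=rev, OF sort_cong])
qed

definition canon :: "nat list \<Rightarrow> nat \<Rightarrow> nat list" where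
  "canon lam m = rev (sort (filter (\<lambda>x. 0 < x) (map (prt lam) [1..<Suc m])))"

lemma canon_id:
  assumes "ispart lam" "length lam \<le> m"
  shows "canon lam m = lam"
proof -
  have mono: "\<And>k. 1 \<le> k \<Longrightarrow> prt lam (Suc k) \<le> prt lam k" using part_mono[OF assms(1)] by simp
  have z: "\<And>k. m < k \<Longrightarrow> prt lam k = 0" using assms(2) by (simp add: part_gt)
  from realize[of "prt lam", OF mono _ z] have
    r: "ispart (canon lam m)" "\<forall>k. prt (canon lam m) k = prt lam k" unfolding canon_def by auto
  show ?thesis
    by (rule part_inj) (use r assms(1) in \<open>auto simp: ispart_def\<close>)
qed

lemma sum_part:
  assumes "length xs \<le> M"
  shows "sum_list xs = (\<Sum>k=1..M. prt xs k)"
proof -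
  have "(\<Sum>k=1..M. prt xs k) = (\<Sum>k=1..length xs. prt xs k)"
    by (rule sum.mono_neutral_right) (use assms in \<open>auto simp: part_gt\<close>)
  also have "\<dots> = (\<Sum>i\<in>{0..<length xs}. prt xs (Suc i))"
  proof -
    have "(\<Sum>k=1..length xs. prt xs k) = (\<Sum>k=Suc 0..<Suc (length xs). prt xs k)"
      by (rule sum.cong) auto
    also have "\<dots> = (\<Sum>i=0..<length xs. prt xs (Suc i))"
      by (rule sum.shift_bounds_Suc_ivl)
    finally show ?thesis .
  qed
  also have "\<dots> = (\<Sum>i\<in>{0..<length xs}. xs ! i)"
    by (rule sum.cong) (auto simp: Defs.part_def)
  finally have calc: "(\<Sum>k=1..M. prt xs k) = (\<Sum>i\<in>{0..<length xs}. xs ! i)" .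
  show ?thesis unfolding calc by (rule sum_list_sum_nth)
qed


lemma removableD:
  assumes "removable lam c"
  shows "1 \<le> c" "c \<le> length lam" "prt lam (Suc c) < prt lam c"
  using assms unfolding removable_def by auto

lemma addableD:
  assumes "addable lam a"
  shows "1 \<le> a" "a \<le> Suc (length lam)" "a = 1 \<or> prt lam (a - 1) > prt lam a"
  using assms unfolding addable_def by auto

lemma move_main:
  assumes ip: "ispart lam" and rem: "removable lam c" and add: "addable lam a" and ca: "c \<noteq> a"
    and nsw: "\<not> (a = Suc c \<and> prt lam a + 1 = prt lam c)"
  shows "ispart (move lam c a) \<and> shifted lam c a (move lam c a)"
proof -
  define w where "w k = prt lam k + (if k = a then 1 else 0) - (if k = c then 1 else 0)" for k
  note r = removableD[OF rem] and d = addableD[OF add]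
  have w0: "w 0 = 0" using r d by (simp add: w_def)
  have z: "\<And>k. Suc (length lam) < k \<Longrightarrow> w k = 0"
    using r d by (auto simp: w_def part_gt)
  have mono: "w (Suc k) \<le> w k" if k1: "1 \<le> k" for k
  proof -
    have pq: "prt lam (Suc k) \<le> prt lam k" using part_mono[OF ip k1, of "Suc k"] by simp
    have A: "prt lam (Suc k) < prt lam k" if "Suc k = a"
      using d(3) that k1 by auto
    have B: "prt lam (Suc k) < prt lam k" if "k = c"
      using r(3) that by simp
    have C: "prt lam (Suc k) + 1 < prt lam k" if "Suc k = a" "k = c"
      using A[OF that(1)] nsw that by auto
    show ?thesis
    proof (cases "Suc k = a")
      case sa: True
      then have "Suc k \<noteq> c" using ca by auto
      show ?thesis
      proof (cases "k = c")
        case True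
        then have "w (Suc k) = prt lam (Suc k) + 1" "w k = prt lam k - 1"
          using sa \<open>Suc k \<noteq> c\<close> ca unfolding w_def by auto
        then show ?thesis using C[OF sa True] by simp
      next
        case False
        then have "w (Suc k) = prt lam (Suc k) + 1" "w k = prt lam k"
          using sa \<open>Suc k \<noteq> c\<close> unfolding w_def by auto
        then show ?thesis using A[OF sa] by simp
      qed
    next
      case sa: False
      then have ws: "w (Suc k) \<le> prt lam (Suc k)" unfolding w_def by simp
      show ?thesis
      proof (cases "k = c")
        case True
        then have "w k = prt lam k - 1" using ca unfolding w_def by auto
        then show ?thesis using B[OF True] ws by simp
      next
        case False
        then have "prt lam k \<le> w k" unfolding w_def by simp
        then show ?thesis using pq ws by simp
      qed
    qed
  qed
  have re: "ispart (rev (sort (filter (\<lambda>x. 0 < x) (map w [1..<Suc (Suc (length lam))]))))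
       \<and> (\<forall>k. prt (rev (sort (filter (\<lambda>x. 0 < x) (map w [1..<Suc (Suc (length lam))])))) k = w k)"
    by (rule realize[of w, OF mono w0 z]) auto
  have mv: "move lam c a = rev (sort (filter (\<lambda>x. 0 < x) (map w [1..<Suc (Suc (length lam))])))"
    unfolding move_alt w_def by simp
  have cpos: "1 \<le> prt lam c" using part_pos[OF ip, of c] r by simp
  have "int (w k) = int (prt lam k) + (if k = a then 1 else 0) - (if k = c then 1 else 0)" for k
    unfolding w_def using cpos ca by auto
  then show ?thesis using re unfolding mv shifted_def by simp
qed

lemma shifted_len:
  assumes "ispart nu" "shifted lam c a nu" "a \<le> Suc (length lam)" "c \<le> length lam"
  shows "length nu \<le> Suc (length lam)"
proof (rule ccontr)
  assume "\<not> ?thesis"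
  then have l: "Suc (length lam) < length nu" by simp
  then have "0 < prt nu (length nu)" using part_pos[OF assms(1)] by simp
  moreover have "int (prt nu (length nu)) = 0"
    using assms(2) l assms(3,4) unfolding shifted_def by (simp add: part_gt)
  ultimately show False by simp
qed

lemma shifted_sum:
  assumes "ispart nu" "shifted lam c a nu" "1 \<le> a" "a \<le> Suc (length lam)" "1 \<le> c" "c \<le> length lam"
  shows "sum_list nu = sum_list lam"
proof -
  let ?S = "{1..Suc (length lam)}"
  have "int (sum_list nu) = (\<Sum>k\<in>?S. int (prt nu k))"
    using sum_part[OF shifted_len[OF assms(1,2,4,6)]] by simp
  also have "\<dots> = (\<Sum>k\<in>?S. int (prt lam k) + (if k = a then 1 else 0) - (if k = c then 1 else 0))"
    using assms(2) unfolding shifted_def by simp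
  also have "\<dots> = (\<Sum>k\<in>?S. int (prt lam k)) + (\<Sum>k\<in>?S. (if k = a then 1 else 0)) - (\<Sum>k\<in>?S. (if k = c then 1 else 0))"
    by (simp add: sum.distrib sum_subtractf)
  also have "\<dots> = (\<Sum>k\<in>?S. int (prt lam k))"
    using assms(3-6) by simp
  also have "\<dots> = int (sum_list lam)"
    using sum_part[of lam "Suc (length lam)"] by simp
  finally show ?thesis by simp
qed

lemma mset_swap_id:
  fixes x y :: nat
  assumes "x \<in># M" "y + 1 = x"
  shows "M - {#x#} + {#x - 1#} - {#y#} + {#y + 1#} = M"
proof -
  have "M - {#x#} + {#x - 1#} - {#y#} = M - {#x#}" using assms(2) by auto
  then show ?thesis using assms by (simp add: insert_DiffM)
qed

lemma move_swap:
  assumes ip: "ispart lam" and rem: "removable lam c" and add: "addable lam a"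
    and sw: "a = Suc c" "prt lam a + 1 = prt lam c"
  shows "move lam c a = lam"
proof -
  note r = removableD[OF rem] and d = addableD[OF add]
  let ?L = "[1..<Suc (Suc (length lam))]"
  have "mset (map (\<lambda>k. prt lam k + (if k = a then 1 else 0) - (if k = c then 1 else 0)) ?L)
      = mset (map (prt lam) ?L) - {#prt lam c#} + {#prt lam c - 1#} - {#prt lam a#} + {#prt lam a + 1#}"
    by (rule mset_move_list) (use r d sw in auto)
  also have "\<dots> = mset (map (prt lam) ?L)"
  proof -
    have "c \<in> {1..<Suc (Suc (length lam))}" using r(1,2) by simp
    then have "c \<in> set ?L" by (simp only: set_upt)
    then have "prt lam c \<in> set (map (prt lam) ?L)" by (subst set_map) (rule imageI)
    then have "prt lam c \<in># mset (map (prt lam) ?L)" by (simp only: set_mset_mset)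
    then show ?thesis using mset_swap_id[of "prt lam c" "mset (map (prt lam) ?L)" "prt lam a"] sw(2) by simp
  qed
  finally have "mset (filter (\<lambda>x. 0 < x) (map (\<lambda>k. prt lam k + (if k = a then 1 else 0) - (if k = c then 1 else 0)) ?L))
      = mset (filter (\<lambda>x. 0 < x) (map (prt lam) ?L))"
    unfolding mset_filter by simp
  then have "move lam c a = canon lam (Suc (length lam))"
    unfolding move_alt canon_def by (rule arg_cong[where f=rev, OF sort_cong])
  then show ?thesis using canon_id[OF ip] by simp
qed

lemma corners_exist:
  assumes ip: "ispart lam" and i: "1 \<le> i" "i \<le> length lam" and j: "1 \<le> j" "j \<le> Suc (length lam)" and ij: "i \<noteq> j"
  shows "\<exists>c a. removable lam c \<and> addable lam a \<and> c \<noteq> a \<and> prt lam c = prt lam i \<and> prt lam a = prt lam j"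
proof -
  define S where "S = {k. 1 \<le> k \<and> k \<le> length lam \<and> prt lam k = prt lam i}"
  define T where "T = {k. 1 \<le> k \<and> k \<le> Suc (length lam) \<and> prt lam k = prt lam j}"
  have fS: "finite S" "i \<in> S" unfolding S_def using i by auto
  have fT: "finite T" "j \<in> T" unfolding T_def using j by auto
  define c where "c = Max S"
  define a where "a = Min T"
  have Sne: "S \<noteq> {}" using fS by auto
  have Tne: "T \<noteq> {}" using fT by auto
  have cS: "c \<in> S" "i \<le> c" using Max_in[OF fS(1) Sne] Max_ge[OF fS] unfolding c_def by auto
  have aT: "a \<in> T" "a \<le> j" using Min_in[OF fT(1) Tne] Min_le[OF fT] unfolding a_def by auto
  have ipos: "0 < prt lam i" using part_pos[OF ip] i by simp
  have remc: "removable lam c"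
  proof -
    have "prt lam (Suc c) \<le> prt lam c" using part_mono[OF ip, of c "Suc c"] cS unfolding S_def by simp
    moreover have "prt lam (Suc c) \<noteq> prt lam c"
    proof
      assume e: "prt lam (Suc c) = prt lam c"
      show False
      proof (cases "Suc c \<le> length lam")
        case True
        then have "Suc c \<in> S" using e cS unfolding S_def by auto
        then show False using Max_ge[OF fS(1)] unfolding c_def by fastforce
      next
        case False
        then have "prt lam (Suc c) = 0" by (simp add: part_gt)
        then show False using e cS ipos unfolding S_def by simp
      qed
    qed
    ultimately show ?thesis using cS unfolding removable_def S_def by auto
  qed
  have adda: "addable lam a"
  proof -
    have "a = 1 \<or> prt lam (a - 1) > prt lam a"
    proof (cases "a = 1")
      case False
      then have a2: "2 \<le> a" using aT unfolding T_def by auto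
      have "prt lam a \<le> prt lam (a - 1)" using part_mono[OF ip, of "a - 1" a] a2 by simp
      moreover have "prt lam (a - 1) \<noteq> prt lam a"
      proof
        assume e: "prt lam (a - 1) = prt lam a"
        then have "a - 1 \<in> T" using aT a2 unfolding T_def by auto
        then show False using Min_le[OF fT(1)] a2 unfolding a_def by fastforce
      qed
      ultimately show ?thesis by simp
    qed simp
    then show ?thesis using aT unfolding addable_def T_def by auto
  qed
  have "c \<noteq> a"
  proof
    assume ca: "c = a"
    then have v: "prt lam i = prt lam j" using cS aT unfolding S_def T_def by auto
    then have "j \<le> length lam" using ipos part_pos[OF ip, of j] by simp
    then have "j \<in> S" using j v unfolding S_def by auto
    then have "j \<le> c" using Max_ge[OF fS(1)] unfolding c_def by simp
    have "i \<in> T" using i v unfolding T_def by auto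
    then have "a \<le> i" using Min_le[OF fT(1)] unfolding a_def by simp
    show False using \<open>j \<le> c\<close> \<open>a \<le> i\<close> cS aT ca ij by simp
  qed
  then show ?thesis using remc adda cS aT unfolding S_def T_def by blast
qed


lemma partitions_iff: "lam \<in> partitions n \<longleftrightarrow> ispart lam \<and> sum_list lam = n"
  unfolding partitions_def ispart_def by auto

lemma shifted_at:
  assumes "shifted lam c a nu"
  shows "int (prt nu k) = int (prt lam k) + (if k = a then 1 else 0) - (if k = c then 1 else 0)"
  using assms unfolding shifted_def by blast

lemma shifted_move:
  assumes ip: "ispart lam" and inu: "ispart nu" and sh: "shifted lam c a nu" and ca: "c \<noteq> a"
  shows "removable lam c \<and> addable lam a \<and> move lam c a = nu \<and> nu \<noteq> lam"
proof -
  note s = shifted_at[OF sh]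
  have c0: "c \<noteq> 0" using s[of 0] ca by (cases "a = 0"; cases "c = 0") auto
  have a0: "a \<noteq> 0" using s[of 0] ca by (cases "a = 0"; cases "c = 0") auto
  have cv: "int (prt nu c) = int (prt lam c) - 1" using s[of c] ca by simp
  then have cpos: "1 \<le> prt lam c" by simp
  then have cl: "c \<le> length lam" using part_pos[OF ip, of c] by simp
  have remc: "removable lam c"
  proof -
    have "prt nu (Suc c) \<le> prt nu c" using part_mono[OF inu, of c "Suc c"] c0 by simp
    moreover have "int (prt nu (Suc c)) \<ge> int (prt lam (Suc c))" using s[of "Suc c"] by simp
    ultimately have "prt lam (Suc c) < prt lam c" using cv by simp
    then show ?thesis unfolding removable_def using c0 cl by simp
  qed
  have al: "a \<le> Suc (length lam)"
  proof (rule ccontr)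
    assume "\<not> ?thesis"
    then have a2: "Suc (length lam) < a" by simp
    have "prt nu a \<le> prt nu (a - 1)" using part_mono[OF inu, of "a - 1" a] a2 by simp
    moreover have "int (prt nu a) = 1" using s[of a] a2 ca by (simp add: part_gt)
    moreover have "int (prt nu (a - 1)) = 0"
    proof -
      have "a - 1 \<noteq> a" "a - 1 \<noteq> c" "length lam < a - 1" using a2 cl by auto
      then show ?thesis using s[of "a - 1"] by (simp add: part_gt)
    qed
    ultimately show False by simp
  qed
  have adda: "addable lam a"
  proof -
    have "a = 1 \<or> prt lam (a - 1) > prt lam a"
    proof (cases "a = 1")
      case False
      then have a2: "2 \<le> a" using a0 by simp
      have "prt nu a \<le> prt nu (a - 1)" using part_mono[OF inu, of "a - 1" a] a2 by simp
      moreover have "int (prt nu a) = int (prt lam a) + 1" using s[of a] ca by simp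
      moreover have "int (prt nu (a - 1)) \<le> int (prt lam (a - 1))"
      proof -
        have "a - 1 \<noteq> a" using a2 by simp
        then show ?thesis using s[of "a - 1"] by simp
      qed
      ultimately show ?thesis by simp
    qed simp
    then show ?thesis unfolding addable_def using a0 al by simp
  qed
  have fe: "prt lam k + (if k = a then 1 else 0) - (if k = c then 1 else 0) = prt nu k" for k
    using s[of k] cpos ca by (cases "k = c"; cases "k = a") auto
  have "move lam c a = canon nu (Suc (length lam))"
    unfolding move_alt canon_def fe by simp
  also have "\<dots> = nu"
    by (rule canon_id[OF inu shifted_len[OF inu sh al cl]])
  finally have mv: "move lam c a = nu" .
  have "nu \<noteq> lam" using s[of a] ca by auto
  then show ?thesis using remc adda mv by simp
qed

lemma admissible_shift:
  assumes lp: "lam \<in> partitions n" and adm: "admissible lam c a"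
  shows "move lam c a \<in> partitions n \<and> shifted lam c a (move lam c a)"
proof -
  have ip: "ispart lam" and sl: "sum_list lam = n" using lp partitions_iff by auto
  have rem: "removable lam c" and add: "addable lam a" and ca: "c \<noteq> a" and ne: "move lam c a \<noteq> lam"
    using adm unfolding admissible_def by auto
  have nsw: "\<not> (a = Suc c \<and> prt lam a + 1 = prt lam c)"
    using move_swap[OF ip rem add] ne by blast
  from move_main[OF ip rem add ca nsw] have m: "ispart (move lam c a)" "shifted lam c a (move lam c a)"
    by auto
  have "sum_list (move lam c a) = n"
    using shifted_sum[OF m] removableD[OF rem] addableD[OF add] sl by simp
  then show ?thesis using m partitions_iff by auto
qed

lemma shift_admissible:
  assumes lp: "lam \<in> partitions n" and np: "nu \<in> partitions n" and sh: "shifted lam c a nu" and ca: "c \<noteq> a"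
  shows "admissible lam c a \<and> move lam c a = nu"
  using shifted_move[OF _ _ sh ca] lp np ca unfolding admissible_def partitions_iff by auto

lemma pmove_iff:
  assumes lp: "lam \<in> partitions n"
  shows "pmove lam nu \<longleftrightarrow> nu \<in> partitions n \<and> (\<exists>c a. c \<noteq> a \<and> shifted lam c a nu)"
proof
  assume "pmove lam nu"
  then obtain i j where ij: "i \<noteq> j" "1 \<le> i" "i \<le> length lam" "1 \<le> j" "j \<le> length lam + 1"
      "move lam i j = nu" "nu \<noteq> lam" unfolding pmove_def by blast
  have ip: "ispart lam" using lp partitions_iff by auto
  obtain c a where ca: "removable lam c" "addable lam a" "c \<noteq> a" "prt lam c = prt lam i" "prt lam a = prt lam j"
    using corners_exist[OF ip ij(2,3) ij(4) _ ij(1)] ij(5) by auto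
  have "move lam i j = move lam c a"
    by (rule move_cong) (use ij ca removableD[OF ca(1)] addableD[OF ca(2)] in auto)
  then have "admissible lam c a" "move lam c a = nu"
    using ca ij unfolding admissible_def by auto
  with admissible_shift[OF lp] ca(3) show "nu \<in> partitions n \<and> (\<exists>c a. c \<noteq> a \<and> shifted lam c a nu)"
    by metis
next
  assume "nu \<in> partitions n \<and> (\<exists>c a. c \<noteq> a \<and> shifted lam c a nu)"
  then obtain c a where np: "nu \<in> partitions n" and ca: "c \<noteq> a" "shifted lam c a nu" by blast
  have "admissible lam c a" "move lam c a = nu" using shift_admissible[OF lp np ca(2,1)] by auto
  then show "pmove lam nu" unfolding pmove_def admissible_def removable_def addable_def by auto
qed

lemma shifted_sym: "shifted lam c a nu \<Longrightarrow> shifted nu a c lam"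
  unfolding shifted_def by auto

lemma padj_iff:
  assumes "lam \<in> partitions n" "nu \<in> partitions n"
  shows "padj lam nu \<longleftrightarrow> (\<exists>c a. c \<noteq> a \<and> shifted lam c a nu)"
  unfolding padj_def using pmove_iff[OF assms(1), of nu] pmove_iff[OF assms(2), of lam] assms
  by (metis shifted_sym)

lemma star_char:
  assumes "lam \<in> partitions n"
  shows "star_simplex lam c = insert lam {nu. nu \<in> partitions n \<and> (\<exists>a. a \<noteq> c \<and> shifted lam c a nu)}"
proof -
  have "{move lam c a | a. admissible lam c a} = {nu. nu \<in> partitions n \<and> (\<exists>a. a \<noteq> c \<and> shifted lam c a nu)}"
  proof (intro set_eqI iffI)
    fix nu assume "nu \<in> {move lam c a | a. admissible lam c a}"
    then obtain a where "admissible lam c a" "nu = move lam c a" by blast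
    then show "nu \<in> {nu. nu \<in> partitions n \<and> (\<exists>a. a \<noteq> c \<and> shifted lam c a nu)}"
      using admissible_shift[OF assms] unfolding admissible_def by fastforce
  next
    fix nu assume "nu \<in> {nu. nu \<in> partitions n \<and> (\<exists>a. a \<noteq> c \<and> shifted lam c a nu)}"
    then obtain a where "nu \<in> partitions n" "a \<noteq> c" "shifted lam c a nu" by blast
    then show "nu \<in> {move lam c a | a. admissible lam c a}"
      using shift_admissible[OF assms, of nu c a] by force
  qed
  then show ?thesis unfolding star_simplex_def by simp
qed

lemma top_char:
  assumes "lam \<in> partitions n"
  shows "top_simplex lam a = insert lam {nu. nu \<in> partitions n \<and> (\<exists>c. c \<noteq> a \<and> shifted lam c a nu)}"
proof -
  have "{move lam c a | c. admissible lam c a} = {nu. nu \<in> partitions n \<and> (\<exists>c. c \<noteq> a \<and> shifted lam c a nu)}"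
  proof (intro set_eqI iffI)
    fix nu assume "nu \<in> {move lam c a | c. admissible lam c a}"
    then obtain c where "admissible lam c a" "nu = move lam c a" by blast
    then show "nu \<in> {nu. nu \<in> partitions n \<and> (\<exists>c. c \<noteq> a \<and> shifted lam c a nu)}"
      using admissible_shift[OF assms] unfolding admissible_def by fastforce
  next
    fix nu assume "nu \<in> {nu. nu \<in> partitions n \<and> (\<exists>c. c \<noteq> a \<and> shifted lam c a nu)}"
    then obtain c where "nu \<in> partitions n" "c \<noteq> a" "shifted lam c a nu" by blast
    then show "nu \<in> {move lam c a | c. admissible lam c a}"
      using shift_admissible[OF assms, of nu c a] by force
  qed
  then show ?thesis unfolding top_simplex_def by simp
qed


lemma padj_sym: "padj x y \<Longrightarrow> padj y x"
  unfolding padj_def by blast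

lemma length_le_sum: "\<forall>x\<in>set xs. (0::nat) < x \<Longrightarrow> length xs \<le> sum_list xs"
  by (induction xs) auto

lemma finite_partitions: "finite (partitions n)"
proof -
  have "partitions n \<subseteq> {xs. set xs \<subseteq> {..n} \<and> length xs \<le> n}"
  proof
    fix xs assume "xs \<in> partitions n"
    then have "sorted_wrt (\<ge>) xs" "\<forall>x\<in>set xs. 0 < x" "sum_list xs = n" unfolding partitions_def by auto
    then show "xs \<in> {xs. set xs \<subseteq> {..n} \<and> length xs \<le> n}"
      using length_le_sum[of xs] member_le_sum_list[of _ xs] by auto
  qed
  moreover have "finite {xs. set xs \<subseteq> {..n} \<and> length xs \<le> n}"
    by (rule finite_lists_length_le) simp
  ultimately show ?thesis by (rule finite_subset)
qed

lemma shifted_unique: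
  assumes "ispart x" "ispart y" "shifted lam c a x" "shifted lam c a y"
  shows "x = y"
proof (rule part_inj)
  show "\<forall>z\<in>set x. 0 < z" "\<forall>z\<in>set y. 0 < z" using assms(1,2) unfolding ispart_def by auto
  fix k show "prt x k = prt y k" using shifted_at[OF assms(3), of k] shifted_at[OF assms(4), of k] by simp
qed

lemma shifted_star: "shifted lam c a x \<Longrightarrow> shifted lam c a' y \<Longrightarrow> shifted x a a' y"
  unfolding shifted_def by auto

lemma shifted_top: "shifted lam c a x \<Longrightarrow> shifted lam c' a y \<Longrightarrow> shifted x c' c y"
  unfolding shifted_def by auto

lemma key:
  assumes "shifted u c a v" "shifted u c' a' w" "shifted v p q w" "c \<noteq> a" "c' \<noteq> a'" "p \<noteq> q"
  shows "c = c' \<or> a = a'"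
proof (rule ccontr)
  assume ne: "\<not> (c = c' \<or> a = a')"
  have eq: "(if k = a' then 1 else 0) - (if k = c' then 1 else 0) - (if k = a then 1 else 0) + (if k = c then 1 else 0)
      = (if k = q then 1 else (0::int)) - (if k = p then 1 else 0)" for k
    using shifted_at[OF assms(1), of k] shifted_at[OF assms(2), of k] shifted_at[OF assms(3), of k] by simp
  have e1: "p = a" "q \<noteq> a" using eq[of a] ne assms(4-6) by (auto split: if_splits)
  have e2: "q = c" "c \<noteq> a'" using eq[of c] ne assms(4-6) e1 by (auto split: if_splits)
  show False using eq[of a'] ne assms(4-6) e1 e2 by (auto split: if_splits)
qed

lemma star_in_cover:
  assumes "lam \<in> partitions n" "removable lam c"
  shows "star_simplex lam c \<in> cover_family n"
  using assms unfolding cover_family_def by blast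

lemma top_in_cover:
  assumes "lam \<in> partitions n" "addable lam a"
  shows "top_simplex lam a \<in> cover_family n"
  using assms unfolding cover_family_def by blast

lemma ispartP: "x \<in> partitions n \<Longrightarrow> ispart x"
  using partitions_iff by auto

lemma star_clique:
  assumes lp: "lam \<in> partitions n"
  shows "star_simplex lam c \<in> clique_complex n"
proof -
  note sc = star_char[OF lp, of c]
  have sub: "star_simplex lam c \<subseteq> partitions n" using sc lp by auto
  have pw: "padj x y" if "x \<in> star_simplex lam c" "y \<in> star_simplex lam c" "x \<noteq> y" for x y
  proof -
    have xp: "x \<in> partitions n" and yp: "y \<in> partitions n" using sub that by auto
    consider "x = lam" | "y = lam" | "x \<noteq> lam" "y \<noteq> lam" by blast
    then show ?thesis
    proof cases
      case 1
      then have "y \<in> {nu \<in> partitions n. \<exists>a. a \<noteq> c \<and> shifted lam c a nu}" using that(2,3) sc by auto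
      then obtain a where "a \<noteq> c" "shifted lam c a y" by blast
      then have "c \<noteq> a" "shifted lam c a y" by auto
      then have "padj x y" unfolding 1 padj_iff[OF lp yp] by blast
      then show ?thesis .
    next
      case 2
      then have "x \<in> {nu \<in> partitions n. \<exists>a. a \<noteq> c \<and> shifted lam c a nu}" using that(1,3) sc by auto
      then obtain a where "a \<noteq> c" "shifted lam c a x" by blast
      then have "c \<noteq> a" "shifted lam c a x" by auto
      then have "padj y x" unfolding 2 padj_iff[OF lp xp] by blast
      then show ?thesis by (rule padj_sym)
    next
      case 3
      then have "x \<in> {nu \<in> partitions n. \<exists>a. a \<noteq> c \<and> shifted lam c a nu}"
        "y \<in> {nu \<in> partitions n. \<exists>a. a \<noteq> c \<and> shifted lam c a nu}" using that(1,2) sc by auto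
      then obtain a a' where a: "a \<noteq> c" "shifted lam c a x" "a' \<noteq> c" "shifted lam c a' y"
        by blast
      have "a \<noteq> a'" using shifted_unique[OF ispartP[OF xp] ispartP[OF yp]] a that(3) by blast
      then have "\<exists>p q. p \<noteq> q \<and> shifted x p q y" using shifted_star[OF a(2) a(4)] by (intro exI conjI)
      then show ?thesis unfolding padj_iff[OF xp yp] .
    qed
  qed
  show ?thesis unfolding clique_complex_def
    using sub pw finite_subset[OF sub finite_partitions] sc by auto
qed

lemma top_clique:
  assumes lp: "lam \<in> partitions n"
  shows "top_simplex lam a \<in> clique_complex n"
proof -
  note sc = top_char[OF lp, of a]
  have sub: "top_simplex lam a \<subseteq> partitions n" using sc lp by auto
  have pw: "padj x y" if "x \<in> top_simplex lam a" "y \<in> top_simplex lam a" "x \<noteq> y" for x y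
  proof -
    have xp: "x \<in> partitions n" and yp: "y \<in> partitions n" using sub that by auto
    consider "x = lam" | "y = lam" | "x \<noteq> lam" "y \<noteq> lam" by blast
    then show ?thesis
    proof cases
      case 1
      then have "y \<in> {nu \<in> partitions n. \<exists>c. c \<noteq> a \<and> shifted lam c a nu}" using that(2,3) sc by auto
      then obtain c where "c \<noteq> a" "shifted lam c a y" by blast
      then have "padj x y" unfolding 1 padj_iff[OF lp yp] by blast
      then show ?thesis .
    next
      case 2
      then have "x \<in> {nu \<in> partitions n. \<exists>c. c \<noteq> a \<and> shifted lam c a nu}" using that(1,3) sc by auto
      then obtain c where "c \<noteq> a" "shifted lam c a x" by blast
      then have "padj y x" unfolding 2 padj_iff[OF lp xp] by blast
      then show ?thesis by (rule padj_sym)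
    next
      case 3
      then have "x \<in> {nu \<in> partitions n. \<exists>c. c \<noteq> a \<and> shifted lam c a nu}"
        "y \<in> {nu \<in> partitions n. \<exists>c. c \<noteq> a \<and> shifted lam c a nu}" using that(1,2) sc by auto
      then obtain c c' where c: "c \<noteq> a" "shifted lam c a x" "c' \<noteq> a" "shifted lam c' a y"
        by blast
      have "c \<noteq> c'" using shifted_unique[OF ispartP[OF xp] ispartP[OF yp]] c that(3) by blast
      then have "c' \<noteq> c" by simp
      then have "\<exists>p q. p \<noteq> q \<and> shifted x p q y" using shifted_top[OF c(2) c(4)] by (intro exI conjI)
      then show ?thesis unfolding padj_iff[OF xp yp] .
    qed
  qed
  show ?thesis unfolding clique_complex_def
    using sub pw finite_subset[OF sub finite_partitions] sc by auto
qed

lemma cover_clique: "\<sigma> \<in> cover_family n \<Longrightarrow> \<sigma> \<in> clique_complex n"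
  unfolding cover_family_def using star_clique top_clique by blast

lemma clique_covered:
  assumes n1: "1 \<le> n" and t: "\<tau> \<in> clique_complex n"
  shows "\<exists>\<sigma>\<in>cover_family n. \<tau> \<subseteq> \<sigma>"
proof -
  have tne: "\<tau> \<noteq> {}" and tsub: "\<tau> \<subseteq> partitions n" and tadj: "\<And>x y. x \<in> \<tau> \<Longrightarrow> y \<in> \<tau> \<Longrightarrow> x \<noteq> y \<Longrightarrow> padj x y"
    using t unfolding clique_complex_def by auto
  obtain u where u: "u \<in> \<tau>" using tne by blast
  have up: "u \<in> partitions n" using u tsub by auto
  have sh: "\<exists>c a. c \<noteq> a \<and> shifted u c a w" if "w \<in> \<tau>" "w \<noteq> u" for w
    using padj_iff[OF up, of w] tadj[OF u that(1)] that tsub by auto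
  have shw: "\<exists>p q. p \<noteq> q \<and> shifted x p q y" if "x \<in> \<tau>" "y \<in> \<tau>" "x \<noteq> y" for x y
    using padj_iff[of x n y] tadj[OF that] that tsub by auto
  show ?thesis
  proof (cases "\<tau> = {u}")
    case True
    have "u \<noteq> []" using up n1 unfolding partitions_def by auto
    then have "1 \<le> length u" by (simp add: Suc_le_eq)
    then have "removable u (length u)"
      using part_pos[OF ispartP[OF up], of "length u"] unfolding removable_def by (auto simp: part_gt)
    then have "star_simplex u (length u) \<in> cover_family n" by (rule star_in_cover[OF up])
    moreover have "\<tau> \<subseteq> star_simplex u (length u)" using True unfolding star_simplex_def by auto
    ultimately show ?thesis by blast
  next
    case False
    then obtain v where v: "v \<in> \<tau>" "v \<noteq> u" using u by blast
    obtain c a where ca: "c \<noteq> a" "shifted u c a v" using sh[OF v] by blast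
    have rem: "removable u c" and add: "addable u a"
      using shifted_move[OF ispartP[OF up] ispartP[of v n] ca(2) ca(1)] v tsub by auto
    show ?thesis
    proof (cases "\<forall>w\<in>\<tau>-{u}. \<exists>a'. a' \<noteq> c \<and> shifted u c a' w")
      case True
      then have "\<tau> \<subseteq> star_simplex u c" using star_char[OF up, of c] tsub by auto
      then show ?thesis using star_in_cover[OF up rem] by blast
    next
      case F1: False
      show ?thesis
      proof (cases "\<forall>w\<in>\<tau>-{u}. \<exists>c'. c' \<noteq> a \<and> shifted u c' a w")
        case True
        then have "\<tau> \<subseteq> top_simplex u a" using top_char[OF up, of a] tsub by auto
        then show ?thesis using top_in_cover[OF up add] by blast
      next
        case F2: False
        obtain w1 where w1: "w1 \<in> \<tau>" "w1 \<noteq> u" "\<not> (\<exists>a'. a' \<noteq> c \<and> shifted u c a' w1)" using F1 by blast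
        obtain w2 where w2: "w2 \<in> \<tau>" "w2 \<noteq> u" "\<not> (\<exists>c'. c' \<noteq> a \<and> shifted u c' a w2)" using F2 by blast
        obtain c1 a1 where c1: "c1 \<noteq> a1" "shifted u c1 a1 w1" using sh[OF w1(1,2)] by blast
        obtain c2 a2 where c2: "c2 \<noteq> a2" "shifted u c2 a2 w2" using sh[OF w2(1,2)] by blast
        have "c1 \<noteq> c"
        proof
          assume "c1 = c"
          then have "a1 \<noteq> c \<and> shifted u c a1 w1" using c1 by simp
          then show False using w1(3) by blast
        qed
        have "w1 \<noteq> v"
        proof
          assume "w1 = v"
          then have "a \<noteq> c \<and> shifted u c a w1" using ca by simp
          then show False using w1(3) by blast
        qed
        then obtain p q where "p \<noteq> q" "shifted v p q w1" using shw[OF v(1) w1(1)] by metis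
        then have "a1 = a" using key[OF ca(2) c1(2)] ca(1) c1(1) \<open>c1 \<noteq> c\<close> by metis
        have "a2 \<noteq> a"
        proof
          assume "a2 = a"
          then have "c2 \<noteq> a \<and> shifted u c2 a w2" using c2 by simp
          then show False using w2(3) by blast
        qed
        have "w2 \<noteq> v"
        proof
          assume "w2 = v"
          then have "c \<noteq> a \<and> shifted u c a w2" using ca by simp
          then show False using w2(3) by blast
        qed
        then obtain p' q' where "p' \<noteq> q'" "shifted v p' q' w2" using shw[OF v(1) w2(1)] by metis
        then have "c2 = c" using key[OF ca(2) c2(2)] ca(1) c2(1) \<open>a2 \<noteq> a\<close> by metis
        have "w1 \<noteq> w2"
        proof
          assume "w1 = w2"
          then have "a2 \<noteq> c \<and> shifted u c a2 w1" using c2 \<open>c2 = c\<close> by simp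
          then show False using w1(3) by blast
        qed
        then obtain p'' q'' where "p'' \<noteq> q''" "shifted w1 p'' q'' w2" using shw[OF w1(1) w2(1)] by metis
        then have "c1 = c2 \<or> a1 = a2" using key[OF c1(2) c2(2)] c1(1) c2(1) by metis
        then show ?thesis using \<open>c1 \<noteq> c\<close> \<open>c2 = c\<close> \<open>a1 = a\<close> \<open>a2 \<noteq> a\<close> by simp
      qed
    qed
  qed
qed

lemma clique_union:
  assumes "1 \<le> n"
  shows "clique_complex n = (\<Union>\<sigma>\<in>cover_family n. full_simplex \<sigma>)"
proof
  show "clique_complex n \<subseteq> (\<Union>\<sigma>\<in>cover_family n. full_simplex \<sigma>)"
  proof
    fix \<tau> assume t: "\<tau> \<in> clique_complex n"
    then obtain \<sigma> where "\<sigma> \<in> cover_family n" "\<tau> \<subseteq> \<sigma>" using clique_covered[OF assms] by blast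
    moreover have "\<tau> \<noteq> {}" using t unfolding clique_complex_def by auto
    ultimately show "\<tau> \<in> (\<Union>\<sigma>\<in>cover_family n. full_simplex \<sigma>)" unfolding full_simplex_def by blast
  qed
next
  show "(\<Union>\<sigma>\<in>cover_family n. full_simplex \<sigma>) \<subseteq> clique_complex n"
  proof
    fix \<tau> assume "\<tau> \<in> (\<Union>\<sigma>\<in>cover_family n. full_simplex \<sigma>)"
    then obtain \<sigma> where s: "\<sigma> \<in> cover_family n" "\<tau> \<noteq> {}" "\<tau> \<subseteq> \<sigma>" unfolding full_simplex_def by blast
    have "\<sigma> \<in> clique_complex n" by (rule cover_clique[OF s(1)])
    then show "\<tau> \<in> clique_complex n" using s finite_subset unfolding clique_complex_def by blast
  qed
qed


lemma alt_pow: "finite A \<Longrightarrow> (\<Sum>B\<in>Pow A. (-1::int) ^ card B) = (if A = {} then 1 else 0)"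
proof (induction A rule: finite_induct)
  case empty then show ?case by simp
next
  case (insert a A)
  have inj: "inj_on (insert a) (Pow A)"
    using insert.hyps(2) unfolding inj_on_def by auto
  have disj: "Pow A \<inter> insert a ` Pow A = {}" using insert.hyps(2) by auto
  have "(\<Sum>B\<in>Pow (insert a A). (-1::int) ^ card B)
      = (\<Sum>B\<in>Pow A. (-1::int) ^ card B) + (\<Sum>B\<in>insert a ` Pow A. (-1::int) ^ card B)"
    unfolding Pow_insert by (rule sum.union_disjoint) (use insert.hyps(1) disj in auto)
  also have "(\<Sum>B\<in>insert a ` Pow A. (-1::int) ^ card B) = (\<Sum>B\<in>Pow A. (-1::int) ^ card (insert a B))"
    by (rule sum.reindex[OF inj, unfolded comp_def])
  also have "\<dots> = (\<Sum>B\<in>Pow A. - ((-1::int) ^ card B))"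
  proof (rule sum.cong[OF refl])
    fix B assume "B \<in> Pow A"
    then have "finite B" "a \<notin> B" using insert.hyps finite_subset by auto
    then show "(-1::int) ^ card (insert a B) = - ((-1) ^ card B)" by simp
  qed
  finally show ?case by (simp add: sum_negf)
qed

lemma alt_ne:
  assumes "finite A" "A \<noteq> {}"
  shows "(\<Sum>B\<in>{B. B \<noteq> {} \<and> B \<subseteq> A}. (-1::int) ^ (card B - 1)) = 1"
proof -
  have e: "{B. B \<noteq> {} \<and> B \<subseteq> A} = Pow A - {{}}" by auto
  have "(\<Sum>B\<in>Pow A - {{}}. (-1::int) ^ (card B - 1)) = (\<Sum>B\<in>Pow A - {{}}. - ((-1::int) ^ card B))"
  proof (rule sum.cong[OF refl])
    fix B assume "B \<in> Pow A - {{}}"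
    then have "finite B" "B \<noteq> {}" using assms finite_subset by auto
    then have "card B = Suc (card B - 1)" by (simp add: card_gt_0_iff)
    then obtain m where cb: "card B = Suc m" by blast
    show "(-1::int) ^ (card B - 1) = - ((-1) ^ card B)" unfolding cb by simp
  qed
  also have "\<dots> = - ((\<Sum>B\<in>Pow A. (-1::int) ^ card B) - 1)"
    using sum.remove[of "Pow A" "{}" "\<lambda>B. (-1::int) ^ card B"] assms(1) by (simp add: sum_negf)
  also have "\<dots> = 1" using alt_pow[OF assms(1)] assms(2) by simp
  finally show ?thesis unfolding e .
qed

lemma euler_nerve:
  fixes C :: "'a set set"
  assumes fC: "finite C" and fs: "\<And>\<sigma>. \<sigma> \<in> C \<Longrightarrow> finite \<sigma>"
  shows "euler_char (\<Union>\<sigma>\<in>C. full_simplex \<sigma>)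
       = euler_char {F. F \<noteq> {} \<and> F \<subseteq> C \<and> (\<Inter>\<sigma>\<in>F. full_simplex \<sigma>) \<noteq> {}}"
proof -
  let ?K = "\<Union>\<sigma>\<in>C. full_simplex \<sigma>"
  let ?P = "{F. F \<noteq> {} \<and> F \<subseteq> C}"
  let ?R = "\<lambda>\<tau> F. \<forall>\<sigma>\<in>F. \<tau> \<subseteq> \<sigma>"
  have fK: "finite ?K"
  proof -
    have "?K \<subseteq> (\<Union>\<sigma>\<in>C. Pow \<sigma>)" unfolding full_simplex_def by auto
    moreover have "finite (\<Union>\<sigma>\<in>C. Pow \<sigma>)" using fC fs by auto
    ultimately show ?thesis by (rule finite_subset)
  qed
  have fP: "finite ?P" by (rule finite_subset[of _ "Pow C"]) (use fC in auto)
  have inner1: "(\<Sum>F\<in>{F\<in>?P. ?R \<tau> F}. (-1::int) ^ (card F - 1)) = 1" if "\<tau> \<in> ?K" for \<tau>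
  proof -
    have e: "{F\<in>?P. ?R \<tau> F} = {F. F \<noteq> {} \<and> F \<subseteq> {\<sigma>\<in>C. \<tau> \<subseteq> \<sigma>}}" by auto
    have ne: "{\<sigma>\<in>C. \<tau> \<subseteq> \<sigma>} \<noteq> {}" using that unfolding full_simplex_def by auto
    have fi: "finite {\<sigma>\<in>C. \<tau> \<subseteq> \<sigma>}" using fC by auto
    show ?thesis unfolding e by (rule alt_ne[OF fi ne])
  qed
  have inner2: "(\<Sum>\<tau>\<in>{\<tau>\<in>?K. ?R \<tau> F}. (-1::int) ^ (card \<tau> - 1))
      = (if (\<Inter>\<sigma>\<in>F. full_simplex \<sigma>) \<noteq> {} then 1 else 0)" if "F \<in> ?P" for F
  proof -
    have Fne: "F \<noteq> {}" and FC: "F \<subseteq> C" using that by auto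
    have set: "{\<tau>\<in>?K. ?R \<tau> F} = {\<tau>. \<tau> \<noteq> {} \<and> \<tau> \<subseteq> \<Inter>F}"
    proof (intro set_eqI iffI)
      fix \<tau> assume "\<tau> \<in> {\<tau>\<in>?K. ?R \<tau> F}"
      then show "\<tau> \<in> {\<tau>. \<tau> \<noteq> {} \<and> \<tau> \<subseteq> \<Inter>F}" unfolding full_simplex_def by auto
    next
      fix \<tau> assume t: "\<tau> \<in> {\<tau>. \<tau> \<noteq> {} \<and> \<tau> \<subseteq> \<Inter>F}"
      obtain \<sigma> where "\<sigma> \<in> F" using Fne by blast
      then show "\<tau> \<in> {\<tau>\<in>?K. ?R \<tau> F}" using t FC unfolding full_simplex_def by blast
    qed
    have fI: "finite (\<Inter>F)"
    proof -
      obtain \<sigma> where "\<sigma> \<in> F" using Fne by blast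
      then show ?thesis using fs FC by (meson Inter_lower finite_subset subsetD)
    qed
    have eqv: "(\<Inter>\<sigma>\<in>F. full_simplex \<sigma>) \<noteq> {} \<longleftrightarrow> \<Inter>F \<noteq> {}"
    proof
      assume "(\<Inter>\<sigma>\<in>F. full_simplex \<sigma>) \<noteq> {}"
      then obtain \<tau> where "\<tau> \<in> (\<Inter>\<sigma>\<in>F. full_simplex \<sigma>)" by blast
      then have "\<tau> \<noteq> {}" "\<tau> \<subseteq> \<Inter>F" using Fne unfolding full_simplex_def by auto
      then show "\<Inter>F \<noteq> {}" by blast
    next
      assume "\<Inter>F \<noteq> {}"
      then obtain x where "x \<in> \<Inter>F" by blast
      then have "{x} \<in> (\<Inter>\<sigma>\<in>F. full_simplex \<sigma>)" unfolding full_simplex_def by auto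
      then show "(\<Inter>\<sigma>\<in>F. full_simplex \<sigma>) \<noteq> {}" by blast
    qed
    show ?thesis
    proof (cases "\<Inter>F = {}")
      case True
      then have emp: "{\<tau>. \<tau> \<noteq> {} \<and> \<tau> \<subseteq> \<Inter>F} = {}" by auto
      have "\<not> ((\<Inter>\<sigma>\<in>F. full_simplex \<sigma>) \<noteq> {})" using eqv True by blast
      then show ?thesis unfolding set emp by simp
    next
      case False
      have "(\<Inter>\<sigma>\<in>F. full_simplex \<sigma>) \<noteq> {}" using eqv False by blast
      then show ?thesis unfolding set using alt_ne[OF fI False] by simp
    qed
  qed
  have "euler_char ?K = (\<Sum>\<tau>\<in>?K. (-1::int) ^ (card \<tau> - 1) * (\<Sum>F\<in>{F\<in>?P. ?R \<tau> F}. (-1::int) ^ (card F - 1)))"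
    unfolding euler_char_def using inner1 by simp
  also have "\<dots> = (\<Sum>\<tau>\<in>?K. \<Sum>F\<in>{F\<in>?P. ?R \<tau> F}. (-1::int) ^ (card \<tau> - 1) * (-1) ^ (card F - 1))"
    by (simp add: sum_distrib_left)
  also have "\<dots> = (\<Sum>F\<in>?P. \<Sum>\<tau>\<in>{\<tau>\<in>?K. ?R \<tau> F}. (-1::int) ^ (card \<tau> - 1) * (-1) ^ (card F - 1))"
    by (rule sum.swap_restrict[OF fK fP])
  also have "\<dots> = (\<Sum>F\<in>?P. (-1::int) ^ (card F - 1) * (\<Sum>\<tau>\<in>{\<tau>\<in>?K. ?R \<tau> F}. (-1) ^ (card \<tau> - 1)))"
    by (simp add: sum_distrib_left mult.commute)
  also have "\<dots> = (\<Sum>F\<in>?P. if (\<Inter>\<sigma>\<in>F. full_simplex \<sigma>) \<noteq> {} then (-1::int) ^ (card F - 1) else 0)"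
  proof (rule sum.cong[OF refl])
    fix F assume F: "F \<in> ?P"
    show "(-1::int) ^ (card F - 1) * (\<Sum>\<tau>\<in>{\<tau>\<in>?K. ?R \<tau> F}. (-1) ^ (card \<tau> - 1))
        = (if (\<Inter>\<sigma>\<in>F. full_simplex \<sigma>) \<noteq> {} then (-1::int) ^ (card F - 1) else 0)"
      unfolding inner2[OF F] by simp
  qed
  also have "\<dots> = (\<Sum>F\<in>{F\<in>?P. (\<Inter>\<sigma>\<in>F. full_simplex \<sigma>) \<noteq> {}}. (-1::int) ^ (card F - 1))"
    by (rule sum.inter_filter[OF fP, symmetric])
  also have "{F\<in>?P. (\<Inter>\<sigma>\<in>F. full_simplex \<sigma>) \<noteq> {}} = {F. F \<noteq> {} \<and> F \<subseteq> C \<and> (\<Inter>\<sigma>\<in>F. full_simplex \<sigma>) \<noteq> {}}"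
    by auto
  finally show ?thesis unfolding euler_char_def .
qed


lemma finite_clique_complex: "finite (clique_complex n)"
proof -
  have "clique_complex n \<subseteq> Pow (partitions n)" unfolding clique_complex_def by auto
  then show ?thesis by (rule finite_subset) (simp add: finite_partitions)
qed

lemma euler_count:
  assumes n1: "1 \<le> n"
  shows "euler_char (clique_complex n)
           = (\<Sum>r = 1..clique_number n. (-1) ^ (r - 1) * int (clique_count r n))"
proof -
  let ?K = "clique_complex n"
  have fK: "finite ?K" by (rule finite_clique_complex)
  have cc: "clique_count r n = card {\<tau>\<in>?K. card \<tau> = r}" for r
    unfolding clique_count_def by (rule refl)
  have fR: "finite {r. clique_count r n \<noteq> 0}"
  proof -
    have "{r. clique_count r n \<noteq> 0} \<subseteq> card ` ?K"
    proof
      fix r assume "r \<in> {r. clique_count r n \<noteq> 0}"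
      then have "clique_count r n \<noteq> 0" by simp
      then have c0: "card {\<tau>\<in>?K. card \<tau> = r} \<noteq> 0" by (simp only: cc not_False_eq_True)
      have "{\<tau>\<in>?K. card \<tau> = r} \<noteq> {}"
      proof
        assume e: "{\<tau>\<in>?K. card \<tau> = r} = {}"
        from c0 show False unfolding e by simp
      qed
      then show "r \<in> card ` ?K" by blast
    qed
    then show ?thesis using fK finite_subset by blast
  qed
  have sub: "card ` ?K \<subseteq> {1..clique_number n}"
  proof
    fix r assume "r \<in> card ` ?K"
    then obtain \<tau> where t: "\<tau> \<in> ?K" "card \<tau> = r" by blast
    then have "\<tau> \<noteq> {}" "finite \<tau>" unfolding clique_complex_def by auto
    then have "0 < card \<tau>" by (simp add: card_gt_0_iff)
    then have "1 \<le> r" using t(2) by simp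
    have ne: "{\<tau>\<in>?K. card \<tau> = r} \<noteq> {}" using t by blast
    have fin: "finite {\<tau>\<in>?K. card \<tau> = r}" using fK by simp
    have "0 < card {\<tau>\<in>?K. card \<tau> = r}" by (subst card_gt_0_iff) (use fin ne in blast)
    then have "card {\<tau>\<in>?K. card \<tau> = r} \<noteq> 0" by simp
    then have "clique_count r n \<noteq> 0" by (simp only: cc not_False_eq_True)
    then have "r \<le> clique_number n" unfolding clique_number_def using Max_ge[OF fR] by simp
    then show "r \<in> {1..clique_number n}" using \<open>1 \<le> r\<close> by simp
  qed
  have "euler_char ?K = (\<Sum>r\<in>card ` ?K. \<Sum>\<tau>\<in>{\<tau>\<in>?K. card \<tau> = r}. (-1::int) ^ (card \<tau> - 1))"
    unfolding euler_char_def by (rule sum.image_gen[OF fK])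
  also have "\<dots> = (\<Sum>r\<in>card ` ?K. (-1) ^ (r - 1) * int (clique_count r n))"
  proof (rule sum.cong[OF refl])
    fix r assume "r \<in> card ` ?K"
    have "(\<Sum>\<tau>\<in>{\<tau>\<in>?K. card \<tau> = r}. (-1::int) ^ (card \<tau> - 1)) = (\<Sum>\<tau>\<in>{\<tau>\<in>?K. card \<tau> = r}. (-1::int) ^ (r - 1))"
      by (rule sum.cong) auto
    also have "\<dots> = (-1) ^ (r - 1) * int (card {\<tau>\<in>?K. card \<tau> = r})"
      by (simp only: sum_constant) simp
    finally show "(\<Sum>\<tau>\<in>{\<tau>\<in>?K. card \<tau> = r}. (-1::int) ^ (card \<tau> - 1)) = (-1) ^ (r - 1) * int (clique_count r n)"
      unfolding cc[of r] .
  qed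
  also have "\<dots> = (\<Sum>r = 1..clique_number n. (-1) ^ (r - 1) * int (clique_count r n))"
  proof (rule sum.mono_neutral_left)
    show "finite {1..clique_number n}" by simp
    show "card ` ?K \<subseteq> {1..clique_number n}" by (rule sub)
    show "\<forall>r\<in>{1..clique_number n} - card ` ?K. (-1) ^ (r - 1) * int (clique_count r n) = 0"
    proof
      fix r assume "r \<in> {1..clique_number n} - card ` ?K"
      then have e: "{\<tau>\<in>?K. card \<tau> = r} = {}" by auto
      have "clique_count r n = 0" unfolding cc[of r] e by (rule card.empty)
      then show "(-1) ^ (r - 1) * int (clique_count r n) = 0" by simp
    qed
  qed
  finally show ?thesis .
qed

theorem proposition3p3:
  fixes n :: nat
  assumes "1 \<le> n"
  shows "euler_char (clique_complex n)
           = (\<Sum>r = 1..clique_number n. (-1) ^ (r - 1) * int (clique_count r n))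
       \<and> (\<Sum>r = 1..clique_number n. (-1) ^ (r - 1) * int (clique_count r n))
           = euler_char (nerve n)"
proof -
  have e1: "euler_char (clique_complex n)
           = (\<Sum>r = 1..clique_number n. (-1) ^ (r - 1) * int (clique_count r n))"
    by (rule euler_count[OF assms])
  have fC: "finite (cover_family n)"
  proof -
    have "cover_family n \<subseteq> Pow (partitions n)"
      using cover_clique unfolding clique_complex_def by blast
    then show ?thesis by (rule finite_subset) (simp add: finite_partitions)
  qed
  have fs: "\<And>\<sigma>. \<sigma> \<in> cover_family n \<Longrightarrow> finite \<sigma>"
    using cover_clique unfolding clique_complex_def by blast
  have "euler_char (clique_complex n) = euler_char (nerve n)"
    unfolding clique_union[OF assms] nerve_def by (rule euler_nerve[OF fC fs])
  then show ?thesis using e1 by simp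
qed

end
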